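(* There is an absolute constant $C>0$ such that the following holds. Let $(G,s,t)$ be an oriented serial superedge on $n$ vertices with principal subgraphs $(G_1,s_1,t_1),\dots,(G_k,s_k,t_k)$, each $G_i$ non-serial and having $n_i$ vertices. Then $$\sum_{i=1}^k n_i\,\big|\mathsf{NT}(G_i)/\mathrm{Aut}_{\mathrm{or}}(G_i,s_i,t_i)\big|\le C\,n\,\big|\mathsf{NT}(G)/\mathrm{Aut}_{\mathrm{or}}(G,s,t)\big|,$$ i.e. the left side is $O\big(n\,|\mathsf{NT}(G)/\mathrm{Aut}_{\mathrm{or}}(G,s,t)|\big)$.
   Context: All graphs are finite, simple and undirected. An oriented series-parallel graph is a triple $(G,s,t)$ where $G$ is a graph and $s\neq t$ are vertices, defined recursively: (i) $G$ is a single edge with vertex set $\{s,t\}$; or (ii) (serial superedge) there are $k\ge 2$ oriented series-parallel graphs $(G_1,s_1,t_1),\dots,(G_k,s_k,t_k)$ with $s_1=s$, $t_k=t$, $t_i=s_{i+1}$ for $1\le i<k$, $V(G_i)\cap V(G_{i+1})=\{s_{i+1}\}$, $V(G_i)\cap V(G_j)=\emptyset$ for $|i-j|\ge2$, and $G=G_1\cup\dots\cup G_k$; or (iii) (parallel superedge) there are $k\ge2$ oriented series-parallel graphs $(G_1,s,t),\dots,(G_k,s,t)$ with $V(G_i)\cap V(G_j)=\{s,t\}$ for $i\neq j$ and $G=G_1\cup\dots\cup G_k$. The $G_i$ are the principal subgraphs; a graph is non-serial if it is not a serial superedge. $\mathrm{Aut}_{\mathrm{or}}(H,u,v)$ is the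 group of automorphisms of $H$ fixing $u$ and $v$. A near tree of $H$ is a spanning subgraph obtained from a spanning tree of $H$ by deleting one edge; $\mathsf{NT}(H)$ is the set of near trees, and $\mathsf{NT}(H)/\Gamma$ the set of orbits under the group $\Gamma$ (near trees $A,B$ in the same orbit iff $A=\sigma(B)$ for some $\sigma\in\Gamma$). *)

theory Defs
  imports Complex_Main
begin

text \<open>Graphs are given by a vertex set V :: nat set and an edge set E :: nat set set
(each edge a 2-element set). An oriented graph (G,s,t) is a tuple (V,E,s,t).\<close>

type_synonym ograph = "nat set \<times> nat set set \<times> nat \<times> nat"

definition verts :: "ograph \<Rightarrow> nat set" where "verts G = fst G"
definition edges :: "ograph \<Rightarrow> nat set set" where "edges G = fst (snd G)"
definition src :: "ograph \<Rightarrow> nat" where "src G = fst (snd (snd G))"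
definition tgt :: "ograph \<Rightarrow> nat" where "tgt G = snd (snd (snd G))"

definition serial_cond :: "ograph \<Rightarrow> ograph list \<Rightarrow> bool" where
  "serial_cond G Gs \<longleftrightarrow>
     (let k = length Gs in
       k \<ge> 2 \<and>
       src (Gs ! 0) = src G \<and> tgt (Gs ! (k - 1)) = tgt G \<and>
       (\<forall>i. i + 1 < k \<longrightarrow> tgt (Gs ! i) = src (Gs ! (i + 1))) \<and>
       (\<forall>i. i + 1 < k \<longrightarrow> verts (Gs ! i) \<inter> verts (Gs ! (i + 1)) = {src (Gs ! (i + 1))}) \<and>
       (\<forall>i j. i < k \<and> j < k \<and> i + 2 \<le> j \<longrightarrow> verts (Gs ! i) \<inter> verts (Gs ! j) = {}) \<and>
       verts G = (\<Union>H\<in>set Gs. verts H) \<and> edges G = (\<Union>H\<in>set Gs. edges H))"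

definition parallel_cond :: "ograph \<Rightarrow> ograph list \<Rightarrow> bool" where
  "parallel_cond G Gs \<longleftrightarrow>
     (let k = length Gs in
       k \<ge> 2 \<and>
       (\<forall>i<k. src (Gs ! i) = src G \<and> tgt (Gs ! i) = tgt G) \<and>
       (\<forall>i j. i < k \<and> j < k \<and> i \<noteq> j \<longrightarrow> verts (Gs ! i) \<inter> verts (Gs ! j) = {src G, tgt G}) \<and>
       verts G = (\<Union>H\<in>set Gs. verts H) \<and> edges G = (\<Union>H\<in>set Gs. edges H))"

inductive osp :: "ograph \<Rightarrow> bool" where
  single_edge: "s \<noteq> t \<Longrightarrow> osp ({s, t}, {{s, t}}, s, t)"
| serial: "serial_cond G Gs \<Longrightarrow> (\<forall>H\<in>set Gs. osp H) \<Longrightarrow> osp G"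
| parallel: "parallel_cond G Gs \<Longrightarrow> (\<forall>H\<in>set Gs. osp H) \<Longrightarrow> osp G"

definition serial_superedge_with :: "ograph \<Rightarrow> ograph list \<Rightarrow> bool" where
  "serial_superedge_with G Gs \<longleftrightarrow> serial_cond G Gs \<and> (\<forall>H\<in>set Gs. osp H)"

definition non_serial :: "ograph \<Rightarrow> bool" where
  "non_serial G \<longleftrightarrow> \<not> (\<exists>Gs. serial_superedge_with G Gs)"

definition connected_on :: "nat set \<Rightarrow> nat set set \<Rightarrow> bool" where
  "connected_on V T \<longleftrightarrow> (\<forall>u\<in>V. \<forall>v\<in>V. (\<lambda>x y. {x, y} \<in> T)\<^sup>*\<^sup>* u v)"

definition acyclic_edges :: "nat set set \<Rightarrow> bool" where
  "acyclic_edges T \<longleftrightarrow> \<not> (\<exists>cs. length cs \<ge> 3 \<and> distinct cs \<and>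
       (\<forall>i<length cs. {cs ! i, cs ! ((i + 1) mod length cs)} \<in> T))"

definition spanning_tree :: "nat set \<Rightarrow> nat set set \<Rightarrow> nat set set \<Rightarrow> bool" where
  "spanning_tree V E T \<longleftrightarrow> T \<subseteq> E \<and> connected_on V T \<and> acyclic_edges T"

definition near_trees :: "nat set \<Rightarrow> nat set set \<Rightarrow> nat set set set" where
  "near_trees V E = {F. \<exists>T. spanning_tree V E T \<and> (\<exists>e\<in>T. F = T - {e})}"

definition aut_or :: "ograph \<Rightarrow> (nat \<Rightarrow> nat) set" where
  "aut_or G = {\<sigma>. bij_betw \<sigma> (verts G) (verts G) \<and>
      (\<forall>x\<in>verts G. \<forall>y\<in>verts G. {x, y} \<in> edges G \<longleftrightarrow> {\<sigma> x, \<sigma> y} \<in> edges G) \<and>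
      \<sigma> (src G) = src G \<and> \<sigma> (tgt G) = tgt G}"

definition img_edges :: "(nat \<Rightarrow> nat) \<Rightarrow> nat set set \<Rightarrow> nat set set" where
  "img_edges \<sigma> B = (\<lambda>e. \<sigma> ` e) ` B"

definition nt_orbits :: "ograph \<Rightarrow> nat set set set set" where
  "nt_orbits G = (\<lambda>A. {B \<in> near_trees (verts G) (edges G).
       \<exists>\<sigma>\<in>aut_or G. A = img_edges \<sigma> B}) ` near_trees (verts G) (edges G)"

end

theory Submission
  imports Defs
begin

definition adj :: "nat set set \<Rightarrow> nat \<Rightarrow> nat \<Rightarrow> bool" where
  "adj E x y \<longleftrightarrow> {x, y} \<in> E"

definition adjv :: "nat set set \<Rightarrow> nat \<Rightarrow> nat \<Rightarrow> nat \<Rightarrow> bool" where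
  "adjv E c x y \<longleftrightarrow> {x, y} \<in> E \<and> x \<noteq> c \<and> y \<noteq> c"

lemma adj_sym: "adj E x y \<Longrightarrow> adj E y x" by (simp add: adj_def insert_commute)

lemma rtranclp_adj_sym: "(adj E)\<^sup>*\<^sup>* x y \<Longrightarrow> (adj E)\<^sup>*\<^sup>* y x"
proof (induction rule: rtranclp_induct)
  case base then show ?case by simp
next
  case (step y z) then show ?case by (meson adj_sym converse_rtranclp_into_rtranclp)
qed

lemma adj_mono: "(adj E)\<^sup>*\<^sup>* x y \<Longrightarrow> E \<subseteq> E' \<Longrightarrow> (adj E')\<^sup>*\<^sup>* x y"
proof (induction rule: rtranclp_induct)
  case base then show ?case by simp
next
  case (step y z) then show ?case
    by (metis adj_def rtranclp.rtrancl_into_rtrancl subsetD)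
qed

lemma adjv_mono: "(adjv E c)\<^sup>*\<^sup>* x y \<Longrightarrow> E \<subseteq> E' \<Longrightarrow> (adjv E' c)\<^sup>*\<^sup>* x y"
proof (induction rule: rtranclp_induct)
  case base then show ?case by simp
next
  case (step y z) then show ?case
    by (metis adjv_def rtranclp.rtrancl_into_rtrancl subsetD)
qed

lemma adjv_adj: "(adjv E c)\<^sup>*\<^sup>* x y \<Longrightarrow> (adj E)\<^sup>*\<^sup>* x y"
proof (induction rule: rtranclp_induct)
  case base then show ?case by simp
next
  case (step y z) then show ?case
    by (metis adjv_def adj_def rtranclp.rtrancl_into_rtrancl)
qed

lemma walk_avoid: "(adj X)\<^sup>*\<^sup>* x y \<Longrightarrow> \<forall>e\<in>X. e \<subseteq> W \<Longrightarrow> c \<notin> W \<Longrightarrow> (adjv X c)\<^sup>*\<^sup>* x y"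
proof (induction rule: rtranclp_induct)
  case base then show ?case by simp
next
  case (step y z)
  then have "{y,z} \<in> X" by (simp add: adj_def)
  with step have "y \<noteq> c" "z \<noteq> c" by auto
  with step \<open>{y,z} \<in> X\<close> show ?case
    by (metis adjv_def rtranclp.rtrancl_into_rtrancl)
qed

lemma adjv_src: "(adjv E c)\<^sup>*\<^sup>* c v \<Longrightarrow> v = c"
  by (erule converse_rtranclpE) (auto simp: adjv_def)

lemma adjv_not: "(adjv E c)\<^sup>*\<^sup>* s u \<Longrightarrow> s \<noteq> c \<Longrightarrow> u \<noteq> c"
  by (induction rule: rtranclp_induct) (auto simp: adjv_def)

lemma connected_on_adj: "connected_on V T \<longleftrightarrow> (\<forall>u\<in>V. \<forall>v\<in>V. (adj T)\<^sup>*\<^sup>* u v)"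
  unfolding connected_on_def adj_def[abs_def] by simp

lemma connected_from: "s \<in> V \<Longrightarrow> (\<forall>v\<in>V. (adj T)\<^sup>*\<^sup>* s v) \<Longrightarrow> connected_on V T"
  unfolding connected_on_adj by (meson rtranclp_adj_sym rtranclp_trans)

definition good :: "ograph \<Rightarrow> bool" where
 "good H \<longleftrightarrow> finite (verts H) \<and> src H \<in> verts H \<and> tgt H \<in> verts H \<and> src H \<noteq> tgt H \<and>
   (\<forall>e\<in>edges H. \<exists>x y. e = {x,y} \<and> x \<noteq> y \<and> x \<in> verts H \<and> y \<in> verts H) \<and>
   (\<forall>v\<in>verts H. (adj (edges H))\<^sup>*\<^sup>* (src H) v) \<and>
   (\<forall>v\<in>verts H. v \<noteq> tgt H \<longrightarrow> (adjv (edges H) (tgt H))\<^sup>*\<^sup>* (src H) v)"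

lemma goodD:
  assumes "good H"
  shows "finite (verts H)" "src H \<in> verts H" "tgt H \<in> verts H" "src H \<noteq> tgt H"
   "\<forall>e\<in>edges H. \<exists>x y. e = {x,y} \<and> x \<noteq> y \<and> x \<in> verts H \<and> y \<in> verts H"
   "\<forall>v\<in>verts H. (adj (edges H))\<^sup>*\<^sup>* (src H) v"
   "\<forall>v\<in>verts H. v \<noteq> tgt H \<longrightarrow> (adjv (edges H) (tgt H))\<^sup>*\<^sup>* (src H) v"
  using assms unfolding good_def by simp_all

lemma good_edge_sub: "good H \<Longrightarrow> e \<in> edges H \<Longrightarrow> e \<subseteq> verts H"
proof -
  assume "good H" "e \<in> edges H"
  then obtain x y where "e = {x,y}" "x \<in> verts H" "y \<in> verts H" using goodD(5) by blast
  then show ?thesis by simp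
qed

lemma good_edge: "good H \<Longrightarrow> {y,z} \<in> edges H \<Longrightarrow> y \<in> verts H \<and> z \<in> verts H \<and> y \<noteq> z"
proof -
  assume "good H" "{y,z} \<in> edges H"
  then obtain a b where "{y,z} = {a,b}" "a \<noteq> b" "a \<in> verts H" "b \<in> verts H" using goodD(5) by blast
  then show ?thesis by (metis doubleton_eq_iff)
qed

lemma good_finE: "good H \<Longrightarrow> finite (edges H)"
proof -
  assume g: "good H"
  then have "edges H \<subseteq> Pow (verts H)" using good_edge_sub by blast
  moreover have "finite (verts H)" using g by (rule goodD)
  ultimately show ?thesis by (meson finite_Pow_iff rev_finite_subset)
qed

lemma good_conn: "good H \<Longrightarrow> connected_on (verts H) (edges H)"
proof -
  assume g: "good H"
  have "src H \<in> verts H" using g by (rule goodD)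
  moreover have "\<forall>v\<in>verts H. (adj (edges H))\<^sup>*\<^sup>* (src H) v" using g by (rule goodD)
  ultimately show ?thesis by (rule connected_from)
qed


locale ser =
  fixes G :: ograph and Gs :: "ograph list"
  assumes sc: "serial_cond G Gs" and gd: "\<forall>H\<in>set Gs. good H"
begin

abbreviation "k \<equiv> length Gs"
abbreviation "Vs i \<equiv> verts (Gs ! i)"
abbreviation "Es i \<equiv> edges (Gs ! i)"
abbreviation "ss i \<equiv> src (Gs ! i)"
abbreviation "ts i \<equiv> tgt (Gs ! i)"

lemma k2: "k \<ge> 2" using sc unfolding serial_cond_def Let_def by simp
lemma k0: "0 < k" using k2 by linarith
lemma ne: "Gs \<noteq> []" using k0 by auto
lemma s0: "ss 0 = src G" using sc unfolding serial_cond_def Let_def by simp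
lemma tk: "ts (k-1) = tgt G" using sc unfolding serial_cond_def Let_def by simp
lemma chain: "i+1<k \<Longrightarrow> ts i = ss (i+1)" using sc unfolding serial_cond_def Let_def by simp
lemma inter1: "i+1<k \<Longrightarrow> Vs i \<inter> Vs (i+1) = {ss (i+1)}" using sc unfolding serial_cond_def Let_def by simp
lemma inter2: "i<k \<Longrightarrow> j<k \<Longrightarrow> i+2 \<le> j \<Longrightarrow> Vs i \<inter> Vs j = {}"
  using sc unfolding serial_cond_def Let_def by simp
lemma VG: "verts G = (\<Union>i<k. Vs i)"
proof -
  have "verts G = (\<Union>H\<in>set Gs. verts H)" using sc unfolding serial_cond_def Let_def by simp
  also have "\<dots> = (\<Union>i<k. Vs i)" by (auto simp: set_conv_nth)
  finally show ?thesis .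
qed
lemma EG: "edges G = (\<Union>i<k. Es i)"
proof -
  have "edges G = (\<Union>H\<in>set Gs. edges H)" using sc unfolding serial_cond_def Let_def by simp
  also have "\<dots> = (\<Union>i<k. Es i)" by (auto simp: set_conv_nth)
  finally show ?thesis .
qed
lemma goodi: "i<k \<Longrightarrow> good (Gs!i)" using gd by simp

lemma ss_in: "i<k \<Longrightarrow> ss i \<in> Vs i" using goodi goodD(2) by blast
lemma ts_in: "i<k \<Longrightarrow> ts i \<in> Vs i" using goodi goodD(3) by blast
lemma ss_ts: "i<k \<Longrightarrow> ss i \<noteq> ts i" using goodi goodD(4) by blast

lemma inter_lt: "i<j \<Longrightarrow> j<k \<Longrightarrow> x \<in> Vs i \<Longrightarrow> x \<in> Vs j \<Longrightarrow> j = i+1 \<and> x = ss j"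
proof -
  assume a: "i<j" "j<k" "x \<in> Vs i" "x \<in> Vs j"
  show ?thesis
  proof (cases "j = i+1")
    case True
    then show ?thesis using inter1[of i] a by auto
  next
    case False
    then have "i+2 \<le> j" using a by simp
    then show ?thesis using inter2[of i j] a by auto
  qed
qed

lemma edge_in: "i<k \<Longrightarrow> e \<in> Es i \<Longrightarrow> \<exists>x y. e={x,y} \<and> x\<noteq>y \<and> x\<in>Vs i \<and> y \<in> Vs i"
  using goodi goodD(5) by blast

lemma edge_unique: "i<k \<Longrightarrow> j<k \<Longrightarrow> e \<in> Es i \<Longrightarrow> e \<in> Es j \<Longrightarrow> i = j"
proof (rule ccontr)
  assume a: "i<k" "j<k" "e \<in> Es i" "e \<in> Es j" "i \<noteq> j"
  obtain x y where xy: "e={x,y}" "x\<noteq>y" "x\<in>Vs i" "y \<in> Vs i" using edge_in a by blast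
  have "x \<in> Vs j" "y \<in> Vs j" using edge_in[OF a(2) a(4)] xy(1) by (metis doubleton_eq_iff insert_iff)+
  show False
  proof (cases "i < j")
    case True
    then show False using inter_lt[of i j x] inter_lt[of i j y] a xy \<open>x \<in> Vs j\<close> \<open>y \<in> Vs j\<close> by auto
  next
    case False
    then have "j < i" using a by simp
    then show False using inter_lt[of j i x] inter_lt[of j i y] a xy \<open>x \<in> Vs j\<close> \<open>y \<in> Vs j\<close> by auto
  qed
qed

lemma edge_G: "e \<in> edges G \<Longrightarrow> \<exists>m<k. e \<in> Es m" using EG by auto

lemma edge_inside: "e \<in> edges G \<Longrightarrow> i<k \<Longrightarrow> e \<subseteq> Vs i \<Longrightarrow> e \<in> Es i"
proof -
  assume a: "e \<in> edges G" "i<k" "e \<subseteq> Vs i"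
  obtain m where m: "m<k" "e \<in> Es m" using edge_G a by blast
  obtain x y where xy: "e={x,y}" "x\<noteq>y" "x\<in>Vs m" "y \<in> Vs m" using edge_in m by blast
  have "m = i"
  proof (rule ccontr)
    assume "m \<noteq> i"
    then show False
      using inter_lt[of m i x] inter_lt[of m i y] inter_lt[of i m x] inter_lt[of i m y] a xy m
      by (metis insert_subset linorder_neqE_nat)
  qed
  then show ?thesis using m by simp
qed

lemma s_notin: "0<j \<Longrightarrow> j<k \<Longrightarrow> src G \<notin> Vs j"
  using inter_lt[of 0 j "src G"] s0 ss_in[of 0] ss_ts[of 0] chain[of 0] by force

lemma t_notin: "i<k-1 \<Longrightarrow> tgt G \<notin> Vs i"
proof
  assume a: "i<k-1" "tgt G \<in> Vs i"
  have "tgt G \<in> Vs (k-1)" using tk ts_in[of "k-1"] k2 by simp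
  then have "k-1 = i+1 \<and> tgt G = ss (k-1)" using inter_lt[of i "k-1" "tgt G"] a by simp
  moreover have "ss (k-1) \<noteq> ts (k-1)" using ss_ts[of "k-1"] k2 by simp
  ultimately show False using tk by simp
qed

lemma finV: "finite (verts G)" using VG goodi goodD(1) by auto

abbreviation "A c v \<equiv> (adjv (edges G) c)\<^sup>*\<^sup>* (src G) v"

lemma Es_sub: "i<k \<Longrightarrow> Es i \<subseteq> edges G" using EG by auto

lemma ts_notin_lower: "m < i \<Longrightarrow> i < k \<Longrightarrow> ts i \<notin> Vs m"
proof
  assume a: "m < i" "i < k" "ts i \<in> Vs m"
  then have "ts i = ss i" using inter_lt[of m i "ts i"] ts_in by auto
  then show False using ss_ts[of i] a by metis
qed

lemma reach_ss: "i<k \<Longrightarrow> m \<le> i \<Longrightarrow> A (ts i) (ss m)"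
proof (induction m)
  case 0 then show ?case using s0 by simp
next
  case (Suc m)
  then have IH: "A (ts i) (ss m)" by simp
  have mk: "m < k" "m < i" using Suc by auto
  have "(adj (Es m))\<^sup>*\<^sup>* (ss m) (ts m)" using goodi[OF mk(1)] goodD(6) ts_in[OF mk(1)] by blast
  then have "(adjv (Es m) (ts i))\<^sup>*\<^sup>* (ss m) (ts m)"
    using walk_avoid[of "Es m" "ss m" "ts m" "Vs m" "ts i"] good_edge_sub[OF goodi[OF mk(1)]]
      ts_notin_lower[OF mk(2) Suc(2)] by blast
  then have "(adjv (edges G) (ts i))\<^sup>*\<^sup>* (ss m) (ts m)" using adjv_mono Es_sub mk by blast
  moreover have "ts m = ss (Suc m)" using chain[of m] Suc by simp
  ultimately show ?case using IH by (metis rtranclp_trans)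
qed

lemma reachA: "i<k \<Longrightarrow> m \<le> i \<Longrightarrow> v \<in> Vs m \<Longrightarrow> v \<noteq> ts i \<Longrightarrow> A (ts i) v"
proof -
  assume a: "i<k" "m \<le> i" "v \<in> Vs m" "v \<noteq> ts i"
  have mk: "m < k" using a by simp
  have r: "A (ts i) (ss m)" using reach_ss a by simp
  show ?thesis
  proof (cases "m < i")
    case True
    have "(adj (Es m))\<^sup>*\<^sup>* (ss m) v" using goodi[OF mk] goodD(6) a by blast
    then have "(adjv (Es m) (ts i))\<^sup>*\<^sup>* (ss m) v"
      using walk_avoid[of "Es m" "ss m" v "Vs m" "ts i"] good_edge_sub[OF goodi[OF mk]]
        ts_notin_lower[OF True a(1)] by blast
    then have "(adjv (edges G) (ts i))\<^sup>*\<^sup>* (ss m) v" using adjv_mono Es_sub mk by blast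
    then show ?thesis using r by (metis rtranclp_trans)
  next
    case False
    then have "m = i" using a by simp
    then have "(adjv (Es m) (ts i))\<^sup>*\<^sup>* (ss m) v" using goodi[OF mk] goodD(7) a by blast
    then have "(adjv (edges G) (ts i))\<^sup>*\<^sup>* (ss m) v" using adjv_mono Es_sub mk by blast
    then show ?thesis using r by (metis rtranclp_trans)
  qed
qed

lemma src_ne_ts: "i<k \<Longrightarrow> src G \<noteq> ts i"
proof (cases "i = 0")
  case True
  assume "i<k" then show ?thesis using True s0 ss_ts by auto
next
  case False
  assume "i<k" then show ?thesis using False s_notin[of i] ts_in[of i] by auto
qed

lemma A_sub: "i<k \<Longrightarrow> A (ts i) v \<Longrightarrow> (\<exists>m\<le>i. v \<in> Vs m) \<and> v \<noteq> ts i"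
proof -
  assume ik: "i<k"
  assume "A (ts i) v"
  then show ?thesis
  proof (induction rule: rtranclp_induct)
    case base
    have "src G \<in> Vs 0" using ss_in[of 0] s0 k0 by simp
    then show ?case using src_ne_ts[OF ik] by blast
  next
    case (step y z)
    then obtain m' where m': "m' \<le> i" "y \<in> Vs m'" "y \<noteq> ts i" by blast
    have e: "{y,z} \<in> edges G" "z \<noteq> ts i" using step(2) by (auto simp: adjv_def)
    obtain m where m: "m<k" "{y,z} \<in> Es m" using edge_G e by blast
    have yz: "y \<in> Vs m" "z \<in> Vs m" using good_edge[OF goodi[OF m(1)] m(2)] by auto
    show ?case
    proof (cases "m \<le> i")
      case True then show ?thesis using yz e by auto
    next
      case False
      then have "m = m'+1 \<and> y = ss m" using inter_lt[of m' m y] m' m yz by auto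
      then have mm: "m = m'+1" "y = ss m" by auto
      then have "m' = i" using m'(1) False by simp
      then have "y = ts i" using chain[of i] mm m by simp
      then show ?thesis using m' by simp
    qed
  qed
qed

lemma glue:
  assumes "\<forall>m<k. connected_on (Vs m) (X m)" "v \<in> verts G"
  shows "(adj (\<Union>m<k. X m))\<^sup>*\<^sup>* (src G) v"
proof -
  let ?X = "\<Union>m<k. X m"
  have sub: "m<k \<Longrightarrow> X m \<subseteq> ?X" for m by auto
  have r: "m<k \<Longrightarrow> (adj ?X)\<^sup>*\<^sup>* (src G) (ss m)" for m
  proof (induction m)
    case 0 then show ?case using s0 by simp
  next
    case (Suc m)
    then have "(adj (X m))\<^sup>*\<^sup>* (ss m) (ts m)" using assms(1) ss_in ts_in
      unfolding connected_on_adj by simp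
    then have "(adj ?X)\<^sup>*\<^sup>* (ss m) (ts m)" using adj_mono sub Suc by simp
    moreover have "ts m = ss (Suc m)" using chain[of m] Suc by simp
    ultimately show ?case using Suc by (metis Suc_lessD rtranclp_trans)
  qed
  obtain m where m: "m<k" "v \<in> Vs m" using assms(2) VG by auto
  have "(adj (X m))\<^sup>*\<^sup>* (ss m) v" using assms(1) m ss_in unfolding connected_on_adj by simp
  then have "(adj ?X)\<^sup>*\<^sup>* (ss m) v" using adj_mono sub m by simp
  then show ?thesis using r[OF m(1)] by (metis rtranclp_trans)
qed

lemma good_G: "good G"
proof -
  have k1: "k-1 < k" "0 < k" using k2 by auto
  have "finite (verts G)" by (rule finV)
  moreover have "src G \<in> verts G" using ss_in[of 0] s0 VG k1 by auto
  moreover have "tgt G \<in> verts G" using ts_in[of "k-1"] tk VG k1 by auto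
  moreover have "src G \<noteq> tgt G"
  proof -
    have "src G \<in> Vs 0" using ss_in[of 0] s0 k0 by simp
    moreover have "tgt G \<notin> Vs 0" using t_notin[of 0] k2 by simp
    ultimately show ?thesis by metis
  qed
  moreover have "\<forall>e\<in>edges G. \<exists>x y. e = {x,y} \<and> x \<noteq> y \<and> x \<in> verts G \<and> y \<in> verts G"
  proof
    fix e assume "e \<in> edges G"
    then obtain m where m: "m<k" "e \<in> Es m" using edge_G by blast
    then show "\<exists>x y. e = {x,y} \<and> x \<noteq> y \<and> x \<in> verts G \<and> y \<in> verts G"
      using edge_in[OF m] VG by blast
  qed
  moreover have "\<forall>v\<in>verts G. (adj (edges G))\<^sup>*\<^sup>* (src G) v"
    using glue[of "\<lambda>m. Es m"] goodi good_conn EG by simp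
  moreover have "\<forall>v\<in>verts G. v \<noteq> tgt G \<longrightarrow> A (tgt G) v"
  proof (intro ballI impI)
    fix v assume "v \<in> verts G" "v \<noteq> tgt G"
    then obtain m where "m<k" "v \<in> Vs m" using VG by auto
    then show "A (tgt G) v" using reachA[of "k-1" m v] tk \<open>v \<noteq> tgt G\<close> by simp
  qed
  ultimately show ?thesis unfolding good_def by blast
qed

end

lemma parallel_good:
  assumes pc: "parallel_cond G Gs" and gd: "\<forall>H\<in>set Gs. good H"
  shows "good G"
proof -
  have k2: "length Gs \<ge> 2" using pc unfolding parallel_cond_def Let_def by simp
  have st: "\<forall>i<length Gs. src (Gs ! i) = src G \<and> tgt (Gs ! i) = tgt G"
    using pc unfolding parallel_cond_def Let_def by simp
  have VG: "verts G = (\<Union>H\<in>set Gs. verts H)" and EG: "edges G = (\<Union>H\<in>set Gs. edges H)"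
    using pc unfolding parallel_cond_def Let_def by simp_all
  have "0 < length Gs" using k2 by linarith
  then have H0: "Gs!0 \<in> set Gs" by (intro nth_mem)
  have g0: "good (Gs!0)" using gd H0 by blast
  have s0: "src (Gs!0) = src G" "tgt (Gs!0) = tgt G" using st \<open>0 < length Gs\<close> by auto
  have "finite (verts G)" using VG gd goodD(1) by auto
  moreover have "src G \<in> verts G" using VG H0 goodD(2)[OF g0] s0 by auto
  moreover have "tgt G \<in> verts G" using VG H0 goodD(3)[OF g0] s0 by auto
  moreover have "src G \<noteq> tgt G" using goodD(4)[OF g0] s0 by simp
  moreover have "\<forall>e\<in>edges G. \<exists>x y. e = {x,y} \<and> x \<noteq> y \<and> x \<in> verts G \<and> y \<in> verts G"
  proof
    fix e assume "e \<in> edges G"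
    then obtain H where H: "H \<in> set Gs" "e \<in> edges H" using EG by auto
    have gH: "good H" using gd H by blast
    obtain x y where xy: "e = {x,y}" "x \<noteq> y" "x \<in> verts H" "y \<in> verts H"
      using goodD(5)[OF gH] H(2) by blast
    have "verts H \<subseteq> verts G" using VG H(1) by auto
    then show "\<exists>x y. e = {x,y} \<and> x \<noteq> y \<and> x \<in> verts G \<and> y \<in> verts G"
      using xy by blast
  qed
  moreover have "\<forall>v\<in>verts G. (adj (edges G))\<^sup>*\<^sup>* (src G) v"
  proof
    fix v assume "v \<in> verts G"
    then obtain i where i: "i < length Gs" "v \<in> verts (Gs!i)" using VG by (auto simp: set_conv_nth)
    have g: "good (Gs!i)" using gd i by simp
    have "(adj (edges (Gs!i)))\<^sup>*\<^sup>* (src G) v" using goodD(6)[OF g] i st by simp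
    moreover have "edges (Gs!i) \<subseteq> edges G" using EG i by auto
    ultimately show "(adj (edges G))\<^sup>*\<^sup>* (src G) v" using adj_mono by blast
  qed
  moreover have "\<forall>v\<in>verts G. v \<noteq> tgt G \<longrightarrow> (adjv (edges G) (tgt G))\<^sup>*\<^sup>* (src G) v"
  proof (intro ballI impI)
    fix v assume "v \<in> verts G" "v \<noteq> tgt G"
    then obtain i where i: "i < length Gs" "v \<in> verts (Gs!i)" using VG by (auto simp: set_conv_nth)
    have g: "good (Gs!i)" using gd i by simp
    have "(adjv (edges (Gs!i)) (tgt G))\<^sup>*\<^sup>* (src G) v" using goodD(7)[OF g] i st \<open>v \<noteq> tgt G\<close> by simp
    moreover have "edges (Gs!i) \<subseteq> edges G" using EG i by auto
    ultimately show "(adjv (edges G) (tgt G))\<^sup>*\<^sup>* (src G) v" using adjv_mono by blast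
  qed
  ultimately show ?thesis unfolding good_def by blast
qed

lemma osp_good: "osp H \<Longrightarrow> good H"
proof (induction rule: osp.induct)
  case (single_edge s t)
  let ?H = "({s, t}, {{s, t}}, s, t) :: ograph"
  have v: "verts ?H = {s,t}" "edges ?H = {{s,t}}" "src ?H = s" "tgt ?H = t"
    by (simp_all add: verts_def edges_def src_def tgt_def)
  have "(adj {{s,t}})\<^sup>*\<^sup>* s t" by (rule r_into_rtranclp) (simp add: adj_def)
  then show ?case using single_edge unfolding good_def v by auto
next
  case (serial G Gs)
  then interpret ser G Gs by unfold_locales auto
  show ?case by (rule good_G)
next
  case (parallel G Gs)
  then show ?case using parallel_good by blast
qed


lemma autD:
  assumes "\<sigma> \<in> aut_or H"
  shows "bij_betw \<sigma> (verts H) (verts H)"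
    "\<And>x y. x\<in>verts H \<Longrightarrow> y\<in>verts H \<Longrightarrow> {x, y} \<in> edges H \<longleftrightarrow> {\<sigma> x, \<sigma> y} \<in> edges H"
    "\<sigma> (src H) = src H" "\<sigma> (tgt H) = tgt H"
  using assms unfolding aut_or_def by auto

lemma aut_id: "id \<in> aut_or H"
  unfolding aut_or_def by simp

lemma aut_comp: "\<sigma> \<in> aut_or H \<Longrightarrow> \<rho> \<in> aut_or H \<Longrightarrow> \<sigma> \<circ> \<rho> \<in> aut_or H"
proof -
  assume a: "\<sigma> \<in> aut_or H" "\<rho> \<in> aut_or H"
  have b: "bij_betw (\<sigma> \<circ> \<rho>) (verts H) (verts H)" using autD(1)[OF a(1)] autD(1)[OF a(2)] bij_betw_trans by blast
  have "\<forall>x\<in>verts H. \<forall>y\<in>verts H. {x, y} \<in> edges H \<longleftrightarrow> {(\<sigma> \<circ> \<rho>) x, (\<sigma> \<circ> \<rho>) y} \<in> edges H"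
  proof (intro ballI)
    fix x y assume xy: "x \<in> verts H" "y \<in> verts H"
    have "\<rho> x \<in> verts H" "\<rho> y \<in> verts H" using autD(1)[OF a(2)] xy bij_betwE by blast+
    then show "{x, y} \<in> edges H \<longleftrightarrow> {(\<sigma> \<circ> \<rho>) x, (\<sigma> \<circ> \<rho>) y} \<in> edges H"
    proof -
      have "{x, y} \<in> edges H \<longleftrightarrow> {\<rho> x, \<rho> y} \<in> edges H" using autD(2)[OF a(2) xy] .
      also have "\<dots> \<longleftrightarrow> {\<sigma> (\<rho> x), \<sigma> (\<rho> y)} \<in> edges H" using autD(2)[OF a(1) \<open>\<rho> x \<in> verts H\<close> \<open>\<rho> y \<in> verts H\<close>] .
      finally show ?thesis by simp
    qed
  qed
  then show ?thesis using b autD(3,4)[OF a(1)] autD(3,4)[OF a(2)] unfolding aut_or_def by simp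
qed

lemma aut_inv:
  assumes g: "good H" and a: "\<sigma> \<in> aut_or H"
  shows "inv_into (verts H) \<sigma> \<in> aut_or H"
proof -
  let ?t = "inv_into (verts H) \<sigma>"
  have bj: "bij_betw \<sigma> (verts H) (verts H)" using autD(1)[OF a] .
  have b: "bij_betw ?t (verts H) (verts H)" using bij_betw_inv_into[OF bj] .
  have "\<forall>x\<in>verts H. \<forall>y\<in>verts H. {x, y} \<in> edges H \<longleftrightarrow> {?t x, ?t y} \<in> edges H"
  proof (intro ballI)
    fix x y assume xy: "x \<in> verts H" "y \<in> verts H"
    have t: "?t x \<in> verts H" "?t y \<in> verts H" using b xy bij_betwE by blast+
    have "\<sigma> (?t x) = x" "\<sigma> (?t y) = y" using bj xy by (simp_all add: bij_betw_inv_into_right)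
    then show "{x, y} \<in> edges H \<longleftrightarrow> {?t x, ?t y} \<in> edges H"
      using autD(2)[OF a t] by simp
  qed
  moreover have "?t (src H) = src H"
    using autD(3)[OF a] goodD(2)[OF g] bj bij_betw_inv_into_left by metis
  moreover have "?t (tgt H) = tgt H"
    using autD(4)[OF a] goodD(3)[OF g] bj bij_betw_inv_into_left by metis
  ultimately show ?thesis using b unfolding aut_or_def by simp
qed

lemma aut_relpow:
  assumes g: "good H" and a: "\<sigma> \<in> aut_or H"
  shows "(adj (edges H) ^^ n) (src H) x \<Longrightarrow> (adj (edges H) ^^ n) (src H) (\<sigma> x)"
proof (induction n arbitrary: x)
  case 0 then show ?case using autD(3)[OF a] by simp
next
  case (Suc n)
  then obtain y where y: "(adj (edges H) ^^ n) (src H) y" "adj (edges H) y x" by auto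
  have "y \<in> verts H" "x \<in> verts H" using good_edge[OF g] y(2) unfolding adj_def by auto
  then have "adj (edges H) (\<sigma> y) (\<sigma> x)" using autD(2)[OF a] y(2) unfolding adj_def by simp
  then show ?case using Suc.IH[OF y(1)] by auto
qed

lemma aut_adjv:
  assumes g: "good H" and a: "\<sigma> \<in> aut_or H" and c: "c \<in> verts H"
  shows "(adjv (edges H) c)\<^sup>*\<^sup>* x y \<Longrightarrow> (adjv (edges H) (\<sigma> c))\<^sup>*\<^sup>* (\<sigma> x) (\<sigma> y)"
proof (induction rule: rtranclp_induct)
  case base then show ?case by simp
next
  case (step y z)
  have e: "{y,z} \<in> edges H" "y \<noteq> c" "z \<noteq> c" using step(2) unfolding adjv_def by auto
  have v: "y \<in> verts H" "z \<in> verts H" using good_edge[OF g e(1)] by auto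
  have i: "inj_on \<sigma> (verts H)" using autD(1)[OF a] bij_betw_def by blast
  have "{\<sigma> y, \<sigma> z} \<in> edges H" using autD(2)[OF a v] e by simp
  moreover have "\<sigma> y \<noteq> \<sigma> c" "\<sigma> z \<noteq> \<sigma> c" using i v c e by (metis inj_on_eq_iff)+
  ultimately have "adjv (edges H) (\<sigma> c) (\<sigma> y) (\<sigma> z)" unfolding adjv_def by simp
  then show ?case using step(3) by (metis rtranclp.rtrancl_into_rtrancl)
qed

lemma walk_dist:
  "(R ^^ n) s x \<Longrightarrow> x \<noteq> X \<Longrightarrow> (\<forall>m<n. \<not> (R ^^ m) s X) \<Longrightarrow> (\<lambda>a b. R a b \<and> a \<noteq> X \<and> b \<noteq> X)\<^sup>*\<^sup>* s x"
proof (induction n arbitrary: x)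
  case 0 then show ?case by simp
next
  case (Suc n)
  then obtain y where y: "(R ^^ n) s y" "R y x" by auto
  have "y \<noteq> X" using Suc.prems(3) y(1) by auto
  then have "(\<lambda>a b. R a b \<and> a \<noteq> X \<and> b \<noteq> X)\<^sup>*\<^sup>* s y" using Suc y by auto
  then show ?case using y(2) \<open>y \<noteq> X\<close> Suc.prems(2) by (simp add: rtranclp.rtrancl_into_rtrancl)
qed

lemma adjv_eq: "adjv E c = (\<lambda>a b. adj E a b \<and> a \<noteq> c \<and> b \<noteq> c)"
  unfolding adjv_def adj_def by (intro ext) simp

definition sepv :: "ograph \<Rightarrow> nat \<Rightarrow> bool" where
  "sepv H c \<longleftrightarrow> c \<in> verts H \<and> c \<noteq> src H \<and> c \<noteq> tgt H \<and> \<not> (adjv (edges H) c)\<^sup>*\<^sup>* (src H) (tgt H)"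

lemma sep_dist:
  assumes g: "good H" and sc: "sepv H c" and sc': "sepv H c'" and ne: "c \<noteq> c'"
    and eq: "\<And>n. (adj (edges H) ^^ n) (src H) c \<longleftrightarrow> (adj (edges H) ^^ n) (src H) c'"
  shows False
proof -
  let ?R = "adj (edges H)" and ?s = "src H" and ?t = "tgt H"
  have cV: "c \<in> verts H" "c' \<in> verts H" using sc sc' unfolding sepv_def by auto
  have "?R\<^sup>*\<^sup>* ?s c" using goodD(6)[OF g] cV by blast
  then obtain n where "(?R ^^ n) ?s c" using rtranclp_imp_relpowp by metis
  define d where "d = (LEAST n. (?R ^^ n) ?s c)"
  have d1: "(?R ^^ d) ?s c" unfolding d_def by (rule LeastI) fact
  have d2: "\<forall>m<d. \<not> (?R ^^ m) ?s c" unfolding d_def using not_less_Least by blast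
  have d1': "(?R ^^ d) ?s c'" using d1 eq by simp
  have d2': "\<forall>m<d. \<not> (?R ^^ m) ?s c'" using d2 eq by simp
  have Qc: "(adjv (edges H) c')\<^sup>*\<^sup>* ?s c" using walk_dist[OF d1 ne d2'] unfolding adjv_eq .
  have Qc': "(adjv (edges H) c)\<^sup>*\<^sup>* ?s c'" using walk_dist[OF d1' ne[symmetric] d2] unfolding adjv_eq .
  have sc1: "?s \<noteq> c" "?s \<noteq> c'" using sc sc' unfolding sepv_def by auto
  have "?R\<^sup>*\<^sup>* c ?t"
  proof -
    have "?R\<^sup>*\<^sup>* ?s ?t" using goodD(6)[OF g] goodD(3)[OF g] by blast
    moreover have "?R\<^sup>*\<^sup>* c ?s" using rtranclp_adj_sym \<open>?R\<^sup>*\<^sup>* ?s c\<close> by blast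
    ultimately show ?thesis by (metis rtranclp_trans)
  qed
  then have "(adjv (edges H) c)\<^sup>*\<^sup>* ?s ?t \<or> (adjv (edges H) c')\<^sup>*\<^sup>* ?s ?t"
  proof (induction rule: rtranclp_induct)
    case base then show ?case using Qc by simp
  next
    case (step u w)
    show ?case
    proof (cases "w = c \<or> w = c'")
      case True then show ?thesis using Qc Qc' by auto
    next
      case False
      from step(3) show ?thesis
      proof
        assume h: "(adjv (edges H) c)\<^sup>*\<^sup>* ?s u"
        then have "u \<noteq> c" using adjv_not sc1 by metis
        then have "adjv (edges H) c u w" using step(2) False unfolding adjv_def adj_def by simp
        then show ?thesis using h by (metis rtranclp.rtrancl_into_rtrancl)
      next
        assume h: "(adjv (edges H) c')\<^sup>*\<^sup>* ?s u"
        then have "u \<noteq> c'" using adjv_not sc1 by metis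
        then have "adjv (edges H) c' u w" using step(2) False unfolding adjv_def adj_def by simp
        then show ?thesis using h by (metis rtranclp.rtrancl_into_rtrancl)
      qed
    qed
  qed
  then show False using sc sc' unfolding sepv_def by blast
qed

lemma aut_fix_sep:
  assumes g: "good H" and a: "\<sigma> \<in> aut_or H" and sc: "sepv H c"
  shows "\<sigma> c = c"
proof (rule ccontr)
  assume ne: "\<sigma> c \<noteq> c"
  let ?t = "inv_into (verts H) \<sigma>"
  have a': "?t \<in> aut_or H" using aut_inv[OF g a] .
  have bj: "bij_betw \<sigma> (verts H) (verts H)" using autD(1)[OF a] .
  have cV: "c \<in> verts H" using sc unfolding sepv_def by simp
  have tc: "?t (\<sigma> c) = c" using bj cV bij_betw_inv_into_left by metis
  have i: "inj_on \<sigma> (verts H)" using bj bij_betw_def by blast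
  have scV: "\<sigma> c \<in> verts H" using bj cV bij_betwE by blast
  have "sepv H (\<sigma> c)"
  proof -
    have "\<sigma> c \<noteq> src H" using autD(3)[OF a] i cV goodD(2)[OF g] sc unfolding sepv_def by (metis inj_on_eq_iff)
    moreover have "\<sigma> c \<noteq> tgt H" using autD(4)[OF a] i cV goodD(3)[OF g] sc unfolding sepv_def by (metis inj_on_eq_iff)
    moreover have "\<not> (adjv (edges H) (\<sigma> c))\<^sup>*\<^sup>* (src H) (tgt H)"
    proof
      assume "(adjv (edges H) (\<sigma> c))\<^sup>*\<^sup>* (src H) (tgt H)"
      then have "(adjv (edges H) (?t (\<sigma> c)))\<^sup>*\<^sup>* (?t (src H)) (?t (tgt H))"
        using aut_adjv[OF g a' scV] by blast
      then show False using tc autD(3,4)[OF a'] sc unfolding sepv_def by simp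
    qed
    ultimately show ?thesis using scV unfolding sepv_def by simp
  qed
  moreover have "(adj (edges H) ^^ n) (src H) (\<sigma> c) \<longleftrightarrow> (adj (edges H) ^^ n) (src H) c" for n
    using aut_relpow[OF g a, of n c] aut_relpow[OF g a', of n "\<sigma> c"] tc by auto
  ultimately show False using sep_dist[OF g _ sc ne] by blast
qed


context ser
begin

lemma gG: "good G" by (rule good_G)

lemma fix_ts: assumes a: "\<sigma> \<in> aut_or G" and i: "i<k" shows "\<sigma> (ts i) = ts i"
proof (cases "i = k-1")
  case True then show ?thesis using tk autD(4)[OF a] by simp
next
  case False
  then have i1: "i < k-1" using i by simp
  have "sepv G (ts i)"
  proof -
    have "ts i \<in> verts G" using ts_in[OF i] VG i by auto
    moreover have "ts i \<noteq> src G" using src_ne_ts[OF i] by simp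
    moreover have "ts i \<noteq> tgt G" using t_notin[OF i1] ts_in[OF i] by auto
    moreover have "\<not> A (ts i) (tgt G)"
    proof
      assume "A (ts i) (tgt G)"
      then obtain m where "m \<le> i" "tgt G \<in> Vs m" using A_sub[OF i] by blast
      then show False using t_notin[of m] i1 by simp
    qed
    ultimately show ?thesis unfolding sepv_def by simp
  qed
  then show ?thesis using aut_fix_sep[OF gG a] by simp
qed

lemma fix_ss: assumes a: "\<sigma> \<in> aut_or G" and i: "i<k" shows "\<sigma> (ss i) = ss i"
proof (cases "i = 0")
  case True then show ?thesis using s0 autD(3)[OF a] by simp
next
  case False
  then have "ss i = ts (i-1)" using chain[of "i-1"] i by simp
  then show ?thesis using fix_ts[OF a, of "i-1"] i by simp
qed

lemma A_pres:
  assumes a: "\<sigma> \<in> aut_or G" and c: "c \<in> verts G" "\<sigma> c = c" and v: "v \<in> verts G"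
  shows "A c v \<longleftrightarrow> A c (\<sigma> v)"
proof
  assume "A c v"
  then have "(adjv (edges G) (\<sigma> c))\<^sup>*\<^sup>* (\<sigma> (src G)) (\<sigma> v)" using aut_adjv[OF gG a c(1)] by blast
  then show "A c (\<sigma> v)" using c autD(3)[OF a] by simp
next
  let ?t = "inv_into (verts G) \<sigma>"
  have a': "?t \<in> aut_or G" using aut_inv[OF gG a] .
  have bj: "bij_betw \<sigma> (verts G) (verts G)" using autD(1)[OF a] .
  have tc: "?t c = c" using bj c bij_betw_inv_into_left by metis
  have tv: "?t (\<sigma> v) = v" using bj v bij_betw_inv_into_left by metis
  assume "A c (\<sigma> v)"
  then have "(adjv (edges G) (?t c))\<^sup>*\<^sup>* (?t (src G)) (?t (\<sigma> v))" using aut_adjv[OF gG a' c(1)] by blast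
  then show "A c v" using tc tv autD(3)[OF a'] by simp
qed

lemma Vs_char:
  assumes i: "i<k" and v: "v \<in> verts G"
  shows "v \<in> Vs i \<longleftrightarrow> (v = ts i \<or> (A (ts i) v \<and> \<not> (v \<noteq> ss i \<and> A (ss i) v)))"
proof
  assume vi: "v \<in> Vs i"
  show "v = ts i \<or> (A (ts i) v \<and> \<not> (v \<noteq> ss i \<and> A (ss i) v))"
  proof (cases "v = ts i")
    case True then show ?thesis by simp
  next
    case False
    have "A (ts i) v" using reachA[OF i _ vi False] by simp
    moreover have "\<not> (v \<noteq> ss i \<and> A (ss i) v)"
    proof
      assume h: "v \<noteq> ss i \<and> A (ss i) v"
      show False
      proof (cases "i = 0")
        case True
        then have "v = src G" using h s0 adjv_src by metis
        then show False using h True s0 by simp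
      next
        case False
        then have e: "ss i = ts (i-1)" using chain[of "i-1"] i by simp
        have i1: "i-1 < k" using i by simp
        obtain m where "m \<le> i-1" "v \<in> Vs m" using A_sub[OF i1, of v] h e by auto
        then have "v = ss i" using inter_lt[of m i v] vi i False by auto
        then show False using h by simp
      qed
    qed
    ultimately show ?thesis by simp
  qed
next
  assume h: "v = ts i \<or> (A (ts i) v \<and> \<not> (v \<noteq> ss i \<and> A (ss i) v))"
  show "v \<in> Vs i"
  proof (cases "v = ts i")
    case True then show ?thesis using ts_in[OF i] by simp
  next
    case False
    then have h2: "A (ts i) v" "\<not> (v \<noteq> ss i \<and> A (ss i) v)" using h by auto
    obtain m where m: "m \<le> i" "v \<in> Vs m" using A_sub[OF i h2(1)] by blast
    show ?thesis
    proof (cases "m = i")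
      case True then show ?thesis using m by simp
    next
      case False
      then have mi: "m < i" "0 < i" using m by auto
      show ?thesis
      proof (cases "v = ss i")
        case True then show ?thesis using ss_in[OF i] by simp
      next
        case nv: False
        have e: "ss i = ts (i-1)" using chain[of "i-1"] i mi by simp
        have "A (ts (i-1)) v" using reachA[of "i-1" m v] mi m nv e i by simp
        then show ?thesis using h2 nv e by simp
      qed
    qed
  qed
qed

lemma Vs_pres:
  assumes a: "\<sigma> \<in> aut_or G" and i: "i<k" and v: "v \<in> Vs i"
  shows "\<sigma> v \<in> Vs i"
proof -
  have bj: "bij_betw \<sigma> (verts G) (verts G)" using autD(1)[OF a] .
  have inj: "inj_on \<sigma> (verts G)" using bj bij_betw_def by blast
  have vG: "v \<in> verts G" using v i VG by auto
  have svG: "\<sigma> v \<in> verts G" using bj vG bij_betwE by blast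
  have tsG: "ts i \<in> verts G" using ts_in[OF i] VG i by auto
  have ssG: "ss i \<in> verts G" using ss_in[OF i] VG i by auto
  have ft: "\<sigma> (ts i) = ts i" using fix_ts[OF a i] .
  have fs: "\<sigma> (ss i) = ss i" using fix_ss[OF a i] .
  have e1: "\<sigma> v = ts i \<longleftrightarrow> v = ts i" using inj vG tsG ft by (metis inj_on_eq_iff)
  have e2: "\<sigma> v = ss i \<longleftrightarrow> v = ss i" using inj vG ssG fs by (metis inj_on_eq_iff)
  have e3: "A (ts i) v \<longleftrightarrow> A (ts i) (\<sigma> v)" using A_pres[OF a tsG ft vG] .
  have e4: "A (ss i) v \<longleftrightarrow> A (ss i) (\<sigma> v)" using A_pres[OF a ssG fs vG] .
  show ?thesis using Vs_char[OF i vG] Vs_char[OF i svG] v e1 e2 e3 e4 by simp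
qed

lemma Vs_img: assumes a: "\<sigma> \<in> aut_or G" and i: "i<k" shows "\<sigma> ` Vs i = Vs i"
proof -
  have inj: "inj_on \<sigma> (verts G)" using autD(1)[OF a] bij_betw_def by blast
  have sub: "Vs i \<subseteq> verts G" using VG i by auto
  show ?thesis
    using endo_inj_surj[of "Vs i" \<sigma>] goodD(1)[OF goodi[OF i]] Vs_pres[OF a i] inj_on_subset[OF inj sub]
    by blast
qed

lemma restrict_aut:
  assumes a: "\<sigma> \<in> aut_or G" and i: "i<k"
  shows "\<sigma> \<in> aut_or (Gs!i)"
proof -
  have inj: "inj_on \<sigma> (verts G)" using autD(1)[OF a] bij_betw_def by blast
  have sub: "Vs i \<subseteq> verts G" using VG i by auto
  have b: "bij_betw \<sigma> (Vs i) (Vs i)" using Vs_img[OF a i] inj_on_subset[OF inj sub] bij_betw_def by blast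
  have ed: "x \<in> Vs i \<Longrightarrow> y \<in> Vs i \<Longrightarrow> {x,y} \<in> Es i \<longleftrightarrow> {x,y} \<in> edges G" for x y
    using Es_sub[OF i] edge_inside[of "{x,y}" i] i by auto
  have "\<forall>x\<in>Vs i. \<forall>y\<in>Vs i. {x, y} \<in> Es i \<longleftrightarrow> {\<sigma> x, \<sigma> y} \<in> Es i"
  proof (intro ballI)
    fix x y assume xy: "x \<in> Vs i" "y \<in> Vs i"
    have sxy: "\<sigma> x \<in> Vs i" "\<sigma> y \<in> Vs i" using Vs_pres[OF a i] xy by auto
    have "x \<in> verts G" "y \<in> verts G" using xy sub by auto
    then show "{x, y} \<in> Es i \<longleftrightarrow> {\<sigma> x, \<sigma> y} \<in> Es i"
      using ed[OF xy] ed[OF sxy] autD(2)[OF a] by simp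
  qed
  then show ?thesis using b fix_ss[OF a i] fix_ts[OF a i] unfolding aut_or_def by simp
qed

lemma edge_equiv:
  assumes a: "\<sigma> \<in> aut_or G" and i: "i<k" and e: "e \<in> edges G"
  shows "(\<sigma> ` e \<in> Es i) \<longleftrightarrow> e \<in> Es i"
proof -
  obtain x y where xy: "e = {x,y}" "x \<in> verts G" "y \<in> verts G" using goodD(5)[OF gG] e by blast
  have inj: "inj_on \<sigma> (verts G)" using autD(1)[OF a] bij_betw_def by blast
  have sub: "Vs i \<subseteq> verts G" using VG i by auto
  have sxy: "\<sigma> x \<in> verts G" "\<sigma> y \<in> verts G" using autD(1)[OF a] xy bij_betwE by blast+
  have sE: "{\<sigma> x, \<sigma> y} \<in> edges G" using autD(2)[OF a xy(2,3)] e xy(1) by simp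
  have bk: "z \<in> verts G \<Longrightarrow> \<sigma> z \<in> Vs i \<Longrightarrow> z \<in> Vs i" for z
  proof -
    assume z: "z \<in> verts G" "\<sigma> z \<in> Vs i"
    then obtain z' where "z' \<in> Vs i" "\<sigma> z' = \<sigma> z" using Vs_img[OF a i] by (metis imageE)
    then show "z \<in> Vs i" using inj z sub by (metis inj_on_eq_iff subsetD)
  qed
  show ?thesis
  proof
    assume "\<sigma> ` e \<in> Es i"
    then have "{\<sigma> x, \<sigma> y} \<in> Es i" using xy by simp
    then have "\<sigma> x \<in> Vs i" "\<sigma> y \<in> Vs i" using good_edge[OF goodi[OF i]] by blast+
    then have "x \<in> Vs i" "y \<in> Vs i" using bk xy by auto
    then show "e \<in> Es i" using edge_inside[OF e i] xy by simp
  next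
    assume "e \<in> Es i"
    then have "x \<in> Vs i" "y \<in> Vs i" using good_edge[OF goodi[OF i]] xy by blast+
    then have "\<sigma> x \<in> Vs i" "\<sigma> y \<in> Vs i" using Vs_pres[OF a i] by auto
    then show "\<sigma> ` e \<in> Es i" using edge_inside[OF sE i] xy by simp
  qed
qed

end


lemma mod3: "(j + 2) mod L = (j::nat) \<Longrightarrow> j < L \<Longrightarrow> 3 \<le> L \<Longrightarrow> False"
proof (cases "j + 2 < L")
  case True then show "(j + 2) mod L = j \<Longrightarrow> False" by simp
next
  case False
  assume "(j + 2) mod L = j" "j < L" "3 \<le> L"
  then have "(j+2) mod L = (j + 2 - L) mod L" using False le_mod_geq by simp
  also have "\<dots> = j + 2 - L" using False \<open>j < L\<close> \<open>3 \<le> L\<close> by simp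
  finally show False using \<open>(j + 2) mod L = j\<close> False \<open>3 \<le> L\<close> by simp
qed

lemma cycle_edge_ne:
  assumes L: "length cs \<ge> 3" and d: "distinct cs" and q: "q < length cs" and j: "j < length cs" and qj: "q \<noteq> j"
  shows "{cs!q, cs!((q+1) mod length cs)} \<noteq> {cs!j, cs!((j+1) mod length cs)}"
proof
  let ?L = "length cs"
  assume eq: "{cs!q, cs!((q+1) mod ?L)} = {cs!j, cs!((j+1) mod ?L)}"
  have Lp: "0 < ?L" using L by linarith
  have m1: "(q+1) mod ?L < ?L" "(j+1) mod ?L < ?L" using Lp by simp_all
  from eq have "(cs!q = cs!j \<and> cs!((q+1) mod ?L) = cs!((j+1) mod ?L)) \<or> (cs!q = cs!((j+1) mod ?L) \<and> cs!((q+1) mod ?L) = cs!j)"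
    by (simp add: doubleton_eq_iff)
  then show False
  proof
    assume "cs!q = cs!j \<and> cs!((q+1) mod ?L) = cs!((j+1) mod ?L)"
    then have "q = j" using nth_eq_iff_index_eq[OF d q j] by simp
    then show False using qj by simp
  next
    assume h: "cs!q = cs!((j+1) mod ?L) \<and> cs!((q+1) mod ?L) = cs!j"
    then have qq: "q = (j+1) mod ?L" "(q+1) mod ?L = j"
      using nth_eq_iff_index_eq[OF d q m1(2)] nth_eq_iff_index_eq[OF d m1(1) j] by simp_all
    have "(j + 2) mod ?L = Suc ((j+1) mod ?L) mod ?L" by (simp add: mod_Suc_eq)
    also have "\<dots> = j" using qq by simp
    finally have "(j + 2) mod ?L = j" .
    then show False using mod3 j L by blast
  qed
qed

lemma cycle_remove:
  assumes L3: "3 \<le> length cs" and d: "distinct cs"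
    and cyc: "\<forall>i<length cs. {cs!i, cs!((i+1) mod length cs)} \<in> S"
    and j: "j < length cs" and conn: "connected_on V S"
  shows "connected_on V (S - {{cs!j, cs!((j+1) mod length cs)}})"
proof -
  let ?L = "length cs"
  define f where "f = {cs!j, cs!((j+1) mod ?L)}"
  define S' where "S' = S - {f}"
  define p where "p a = cs!((j+1+a) mod ?L)" for a
  have Lp: "0 < ?L" using L3 by linarith
  have path: "a < ?L \<Longrightarrow> (adj S')\<^sup>*\<^sup>* (p 0) (p a)" for a
  proof (induction a)
    case 0 then show ?case by simp
  next
    case (Suc a)
    define q where "q = (j+1+a) mod ?L"
    have q: "q < ?L" unfolding q_def using Lp by simp
    have qj: "q \<noteq> j"
    proof
      assume "q = j"
      show False
      proof (cases "j+1+a < ?L")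
        case True then show False using \<open>q = j\<close> unfolding q_def by simp
      next
        case False
        then have "(j+1+a) mod ?L = (j+1+a - ?L) mod ?L" using le_mod_geq by simp
        also have "\<dots> = j+1+a - ?L" using Suc.prems j False by simp
        finally show False using \<open>q = j\<close> Suc.prems unfolding q_def by simp
      qed
    qed
    have q1: "(q+1) mod ?L = (j+1+Suc a) mod ?L" unfolding q_def by (simp add: mod_Suc_eq)
    have "{cs!q, cs!((q+1) mod ?L)} \<in> S" using cyc q by simp
    moreover have "{cs!q, cs!((q+1) mod ?L)} \<noteq> f" unfolding f_def using cycle_edge_ne[OF L3 d q j qj] .
    ultimately have "adj S' (p a) (p (Suc a))" unfolding adj_def S'_def p_def q1[symmetric] q_def by simp
    then show ?case using Suc by (metis Suc_lessD rtranclp.rtrancl_into_rtrancl)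
  qed
  have "p (?L - 1) = cs!j"
  proof -
    have "j+1+(?L-1) = j + ?L" using Lp by simp
    then show ?thesis unfolding p_def using j by simp
  qed
  then have ba: "(adj S')\<^sup>*\<^sup>* (cs!((j+1) mod ?L)) (cs!j)" using path[of "?L - 1"] Lp unfolding p_def by simp
  have ab: "(adj S')\<^sup>*\<^sup>* (cs!j) (cs!((j+1) mod ?L))" using rtranclp_adj_sym[OF ba] .
  have stp: "adj S x y \<Longrightarrow> (adj S')\<^sup>*\<^sup>* x y" for x y
  proof (cases "{x,y} = f")
    case True
    then have "(x = cs!j \<and> y = cs!((j+1) mod ?L)) \<or> (x = cs!((j+1) mod ?L) \<and> y = cs!j)"
      unfolding f_def by (simp add: doubleton_eq_iff)
    then show ?thesis using ab ba by auto
  next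
    case False
    assume "adj S x y"
    then have "adj S' x y" using False unfolding adj_def S'_def by simp
    then show ?thesis by simp
  qed
  have all: "(adj S)\<^sup>*\<^sup>* u v \<Longrightarrow> (adj S')\<^sup>*\<^sup>* u v" for u v
  proof (induction rule: rtranclp_induct)
    case base then show ?case by simp
  next
    case (step y z) then show ?case using stp by (metis rtranclp_trans)
  qed
  show ?thesis using conn all unfolding connected_on_adj S'_def f_def by blast
qed

lemma nt_sub: "F \<in> near_trees V E \<Longrightarrow> F \<subseteq> E"
  unfolding near_trees_def spanning_tree_def by auto

definition orb :: "ograph \<Rightarrow> nat set set \<Rightarrow> nat set set set" where
  "orb H X = {Y \<in> near_trees (verts H) (edges H). \<exists>\<sigma>\<in>aut_or H. X = img_edges \<sigma> Y}"

lemma nt_orbits_orb: "nt_orbits H = orb H ` near_trees (verts H) (edges H)"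
  unfolding nt_orbits_def orb_def by simp

lemma img_comp: "img_edges (\<sigma> \<circ> \<rho>) Y = img_edges \<sigma> (img_edges \<rho> Y)"
  unfolding img_edges_def by (simp add: image_image image_comp)

lemma img_id: "img_edges id Y = Y"
  unfolding img_edges_def by simp

lemma img_inv:
  assumes g: "good H" and a: "\<sigma> \<in> aut_or H" and B: "B \<subseteq> edges H"
  shows "img_edges (inv_into (verts H) \<sigma>) (img_edges \<sigma> B) = B"
proof -
  have inj: "inj_on \<sigma> (verts H)" using autD(1)[OF a] bij_betw_def by blast
  have "e \<in> B \<Longrightarrow> inv_into (verts H) \<sigma> ` \<sigma> ` e = e" for e
    using inv_into_image_cancel[OF inj] good_edge_sub[OF g] B by blast
  then show ?thesis unfolding img_edges_def by (simp add: image_image)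
qed

lemma orb_eq:
  assumes g: "good H" and B1: "B1 \<subseteq> edges H" and B2: "B2 \<subseteq> edges H"
    and a: "\<sigma> \<in> aut_or H" and eq: "B1 = img_edges \<sigma> B2"
  shows "orb H B1 = orb H B2"
proof
  show "orb H B1 \<subseteq> orb H B2"
  proof
    fix Y assume "Y \<in> orb H B1"
    then obtain \<rho> where r: "Y \<in> near_trees (verts H) (edges H)" "\<rho> \<in> aut_or H" "B1 = img_edges \<rho> Y"
      unfolding orb_def by blast
    let ?t = "inv_into (verts H) \<sigma>"
    have "B2 = img_edges ?t B1" using img_inv[OF g a B2] eq by simp
    also have "\<dots> = img_edges (?t \<circ> \<rho>) Y" using r(3) img_comp by simp
    finally show "Y \<in> orb H B2" using r aut_comp[OF aut_inv[OF g a] r(2)] unfolding orb_def by blast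
  qed
next
  show "orb H B2 \<subseteq> orb H B1"
  proof
    fix Y assume "Y \<in> orb H B2"
    then obtain \<rho> where r: "Y \<in> near_trees (verts H) (edges H)" "\<rho> \<in> aut_or H" "B2 = img_edges \<rho> Y"
      unfolding orb_def by blast
    have "B1 = img_edges (\<sigma> \<circ> \<rho>) Y" using eq r(3) img_comp by simp
    then show "Y \<in> orb H B1" using r aut_comp[OF a r(2)] unfolding orb_def by blast
  qed
qed


context ser
begin

lemma ext_nt:
  assumes i: "i<k" and B: "B \<in> near_trees (Vs i) (Es i)"
  shows "\<exists>F\<in>near_trees (verts G) (edges G). F \<inter> Es i = B"
proof -
  obtain T e where T: "spanning_tree (Vs i) (Es i) T" "e \<in> T" "B = T - {e}"
    using B unfolding near_trees_def by blast
  have TE: "T \<subseteq> Es i" "connected_on (Vs i) T" "acyclic_edges T"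
    using T(1) unfolding spanning_tree_def by auto
  let ?E = "edges G"
  define P where "P S \<longleftrightarrow> T \<subseteq> S \<and> S \<subseteq> T \<union> (?E - Es i) \<and> connected_on (verts G) S" for S
  have sG: "src G \<in> verts G" using goodD(2)[OF gG] .
  have "P (T \<union> (?E - Es i))"
  proof -
    define X where "X m = (if m = i then T else Es m)" for m
    have "\<forall>m<k. connected_on (Vs m) (X m)"
      using TE(2) goodi good_conn unfolding X_def by simp
    then have r: "\<forall>v\<in>verts G. (adj (\<Union>m<k. X m))\<^sup>*\<^sup>* (src G) v" using glue by blast
    have "(\<Union>m<k. X m) \<subseteq> T \<union> (?E - Es i)"
    proof
      fix x assume "x \<in> (\<Union>m<k. X m)"
      then obtain m where m: "m<k" "x \<in> X m" by blast
      show "x \<in> T \<union> (?E - Es i)"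
      proof (cases "m = i")
        case True then show ?thesis using m unfolding X_def by simp
      next
        case False
        then have "x \<in> Es m" using m unfolding X_def by simp
        then have "x \<in> ?E" "x \<notin> Es i" using Es_sub[OF m(1)] edge_unique[OF m(1) i] False by auto
        then show ?thesis by simp
      qed
    qed
    then have "\<forall>v\<in>verts G. (adj (T \<union> (?E - Es i)))\<^sup>*\<^sup>* (src G) v"
      using r adj_mono[of "\<Union>m<k. X m" "src G" _ "T \<union> (?E - Es i)"] by blast
    then have "connected_on (verts G) (T \<union> (?E - Es i))" using connected_from[OF sG] by blast
    then show ?thesis unfolding P_def by simp
  qed
  then obtain S where S: "P S" and Smin: "\<forall>S'. P S' \<longrightarrow> card S \<le> card S'"
    using ex_has_least_nat[of P _ card] by blast
  have SE: "S \<subseteq> ?E" using S TE(1) Es_sub[OF i] unfolding P_def by blast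
  have finS: "finite S" using SE good_finE[OF gG] finite_subset by blast
  have SEi: "S \<inter> Es i = T" using S TE(1) unfolding P_def by blast
  have acyc: "acyclic_edges S"
    unfolding acyclic_edges_def
  proof
    assume "\<exists>cs. 3 \<le> length cs \<and> distinct cs \<and> (\<forall>i<length cs. {cs ! i, cs ! ((i + 1) mod length cs)} \<in> S)"
    then obtain cs where cs: "3 \<le> length cs" "distinct cs" "\<forall>i<length cs. {cs ! i, cs ! ((i + 1) mod length cs)} \<in> S"
      by blast
    show False
    proof (cases "\<exists>j<length cs. {cs ! j, cs ! ((j + 1) mod length cs)} \<notin> T")
      case True
      then obtain j where j: "j < length cs" "{cs ! j, cs ! ((j + 1) mod length cs)} \<notin> T" by blast
      let ?f = "{cs ! j, cs ! ((j + 1) mod length cs)}"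
      have fS: "?f \<in> S" using cs(3) j(1) by blast
      have "P (S - {?f})"
        using S j(2) cycle_remove[OF cs j(1), of "verts G"] unfolding P_def by blast
      then have "card S \<le> card (S - {?f})" using Smin by blast
      moreover have "card (S - {?f}) < card S" by (rule card_Diff1_less[OF finS fS])
      ultimately show False by simp
    next
      case False
      then have "\<forall>j<length cs. {cs ! j, cs ! ((j + 1) mod length cs)} \<in> T" by blast
      then show False using TE(3) cs(1,2) unfolding acyclic_edges_def by blast
    qed
  qed
  have st: "spanning_tree (verts G) ?E S" using SE S acyc unfolding spanning_tree_def P_def by blast
  have eS: "e \<in> S" using T(2) S unfolding P_def by blast
  have "S - {e} \<in> near_trees (verts G) ?E" unfolding near_trees_def using st eS by blast
  moreover have "(S - {e}) \<inter> Es i = B" using SEi T(3) by blast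
  ultimately show ?thesis by blast
qed

lemma sum_card: "(\<Sum>i<k. card (Vs i)) \<le> 2 * card (verts G)"
proof -
  define W where "W i = Vs i - {ss i}" for i
  have fin: "i<k \<Longrightarrow> finite (Vs i)" for i using goodi goodD(1) by blast
  have disj: "i<k \<Longrightarrow> j<k \<Longrightarrow> i \<noteq> j \<Longrightarrow> W i \<inter> W j = {}" for i j
  proof -
    assume a: "i<k" "j<k" "i \<noteq> j"
    show "W i \<inter> W j = {}"
    proof (rule ccontr)
      assume "W i \<inter> W j \<noteq> {}"
      then obtain x where x: "x \<in> Vs i" "x \<noteq> ss i" "x \<in> Vs j" "x \<noteq> ss j" unfolding W_def by blast
      show False
      proof (cases "i < j")
        case True then show False using inter_lt[of i j x] a x by auto
      next
        case False then have "j < i" using a by simp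
        then show False using inter_lt[of j i x] a x by auto
      qed
    qed
  qed
  have cw: "i<k \<Longrightarrow> card (Vs i) \<le> 2 * card (W i)" for i
  proof -
    assume i: "i<k"
    have "card (W i) = card (Vs i) - 1" unfolding W_def using ss_in[OF i] fin[OF i] by (simp add: card_Diff_singleton)
    moreover have "ts i \<in> W i" unfolding W_def using ts_in[OF i] ss_ts[OF i] by auto
    moreover have "finite (W i)" unfolding W_def using fin[OF i] by simp
    ultimately have c1: "card (W i) \<ge> 1"
      using card_gt_0_iff[of "W i"] by fastforce
    have "card (Vs i) = card (W i) + 1" using \<open>card (W i) = card (Vs i) - 1\<close> c1 by linarith
    then show ?thesis using c1 by simp
  qed
  have "(\<Sum>i<k. card (Vs i)) \<le> (\<Sum>i<k. 2 * card (W i))" using cw by (intro sum_mono) simp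
  also have "\<dots> = 2 * (\<Sum>i<k. card (W i))" by (simp add: sum_distrib_left)
  also have "(\<Sum>i<k. card (W i)) = card (\<Union>i<k. W i)"
    using card_UN_disjoint[of "{..<k}" W] fin disj unfolding W_def by simp
  also have "card (\<Union>i<k. W i) \<le> card (verts G)"
    using finV VG unfolding W_def by (intro card_mono) auto
  finally show ?thesis by simp
qed

lemma card_orb:
  assumes i: "i<k"
  shows "card (nt_orbits (Gs!i)) \<le> card (nt_orbits G)"
proof -
  let ?H = "Gs!i"
  let ?NH = "near_trees (Vs i) (Es i)"
  let ?NG = "near_trees (verts G) (edges G)"
  define \<phi> where "\<phi> B = (SOME F. F \<in> ?NG \<and> F \<inter> Es i = B)" for B
  have phi: "B \<in> ?NH \<Longrightarrow> \<phi> B \<in> ?NG \<and> \<phi> B \<inter> Es i = B" for B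
  proof -
    assume "B \<in> ?NH"
    then have "\<exists>F. F \<in> ?NG \<and> F \<inter> Es i = B" using ext_nt[OF i] by blast
    then show ?thesis unfolding \<phi>_def by (rule someI_ex)
  qed
  have key: "B1 \<in> ?NH \<Longrightarrow> B2 \<in> ?NH \<Longrightarrow> orb G (\<phi> B1) = orb G (\<phi> B2) \<Longrightarrow> orb ?H B1 = orb ?H B2" for B1 B2
  proof -
    assume b: "B1 \<in> ?NH" "B2 \<in> ?NH" "orb G (\<phi> B1) = orb G (\<phi> B2)"
    have p1: "\<phi> B1 \<in> ?NG" "\<phi> B1 \<inter> Es i = B1" using phi b(1) by auto
    have p2: "\<phi> B2 \<in> ?NG" "\<phi> B2 \<inter> Es i = B2" using phi b(2) by auto
    have "\<phi> B2 = img_edges id (\<phi> B2)" using img_id by simp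
    then have "\<phi> B2 \<in> orb G (\<phi> B2)" unfolding orb_def using p2(1) aut_id[of G] by blast
    then have "\<phi> B2 \<in> orb G (\<phi> B1)" using b(3) by simp
    then obtain \<sigma> where s: "\<sigma> \<in> aut_or G" "\<phi> B1 = img_edges \<sigma> (\<phi> B2)" unfolding orb_def by blast
    have sub2: "\<phi> B2 \<subseteq> edges G" using nt_sub p2(1) by blast
    have "img_edges \<sigma> (\<phi> B2) \<inter> Es i = img_edges \<sigma> (\<phi> B2 \<inter> Es i)"
    proof
      show "img_edges \<sigma> (\<phi> B2) \<inter> Es i \<subseteq> img_edges \<sigma> (\<phi> B2 \<inter> Es i)"
        unfolding img_edges_def using edge_equiv[OF s(1) i] sub2 by blast
      show "img_edges \<sigma> (\<phi> B2 \<inter> Es i) \<subseteq> img_edges \<sigma> (\<phi> B2) \<inter> Es i"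
        unfolding img_edges_def using edge_equiv[OF s(1) i] sub2 by blast
    qed
    then have eq: "B1 = img_edges \<sigma> B2" using s(2) p1(2) p2(2) by simp
    have "good ?H" using goodi[OF i] .
    moreover have "B1 \<subseteq> Es i" "B2 \<subseteq> Es i" using nt_sub b by auto
    ultimately show ?thesis using orb_eq restrict_aut[OF s(1) i] eq by blast
  qed
  define g where "g X = orb ?H (SOME B. B \<in> ?NH \<and> orb G (\<phi> B) = X)" for X
  have "orb ?H ` ?NH \<subseteq> g ` (orb G ` ?NG)"
  proof
    fix Y assume "Y \<in> orb ?H ` ?NH"
    then obtain B where B: "B \<in> ?NH" "Y = orb ?H B" by blast
    let ?X = "orb G (\<phi> B)"
    have X: "?X \<in> orb G ` ?NG" using phi[OF B(1)] by blast
    have "\<exists>B'. B' \<in> ?NH \<and> orb G (\<phi> B') = ?X" using B by blast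
    define B0 where "B0 = (SOME B'. B' \<in> ?NH \<and> orb G (\<phi> B') = ?X)"
    have "B0 \<in> ?NH \<and> orb G (\<phi> B0) = ?X"
      unfolding B0_def by (rule someI_ex) fact
    then have "orb ?H B0 = orb ?H B" using key[of B0 B] B(1) by blast
    then have "g ?X = Y" unfolding g_def B0_def[symmetric] using B(2) by simp
    then show "Y \<in> g ` (orb G ` ?NG)" using X by blast
  qed
  moreover have finNG: "finite ?NG"
  proof -
    have "?NG \<subseteq> Pow (edges G)" using nt_sub by blast
    then show ?thesis using good_finE[OF gG] by (meson finite_Pow_iff rev_finite_subset)
  qed
  ultimately have "card (orb ?H ` ?NH) \<le> card (g ` (orb G ` ?NG))"
    by (intro card_mono) auto
  also have "\<dots> \<le> card (orb G ` ?NG)" using finNG by (intro card_image_le) simp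
  finally show ?thesis unfolding nt_orbits_orb by simp
qed

end

theorem lemma5p14:
  shows "\<exists>C::real. C > 0 \<and>
    (\<forall>G Gs. serial_superedge_with G Gs \<and> (\<forall>H\<in>set Gs. non_serial H) \<longrightarrow>
      (\<Sum>i<length Gs. real (card (verts (Gs ! i))) * real (card (nt_orbits (Gs ! i))))
        \<le> C * real (card (verts G)) * real (card (nt_orbits G)))"
proof (intro exI[of _ 2] conjI allI impI)
  show "(2::real) > 0" by simp
  fix G Gs
  assume h: "serial_superedge_with G Gs \<and> (\<forall>H\<in>set Gs. non_serial H)"
  then have sc: "serial_cond G Gs" "\<forall>H\<in>set Gs. osp H" unfolding serial_superedge_with_def by auto
  interpret ser G Gs using sc osp_good by unfold_locales auto
  let ?O = "real (card (nt_orbits G))"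
  have "(\<Sum>i<k. real (card (Vs i)) * real (card (nt_orbits (Gs ! i))))
      \<le> (\<Sum>i<k. real (card (Vs i)) * ?O)"
    using card_orb by (intro sum_mono mult_left_mono) auto
  also have "\<dots> = real (\<Sum>i<k. card (Vs i)) * ?O" by (simp add: sum_distrib_right)
  also have "\<dots> \<le> real (2 * card (verts G)) * ?O"
  proof (rule mult_right_mono)
    show "real (\<Sum>i<k. card (Vs i)) \<le> real (2 * card (verts G))" using sum_card by (simp only: of_nat_le_iff)
  qed simp
  finally show "(\<Sum>i<length Gs. real (card (verts (Gs ! i))) * real (card (nt_orbits (Gs ! i))))
        \<le> 2 * real (card (verts G)) * real (card (nt_orbits G))" by simp
qed

end
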